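(* Let $k$ be a positive integer, $G$ a graph and $K$ a subgraph of $G$ with the following property: for every $s\ge1$, every cover $H$ of $G$ with respect to $L(v)=\{1,\dots,s\}$ for all $v$, and every $F=(f_1,\dots,f_s)$ with $f_i:V(G)\to\mathbb{Z}_{\ge0}$ and $|f(v)|\ge k$ for every vertex $v$, each DP-$F$-coloring of $K$ (with respect to the restriction of $H$ to the vertices over $V(K)$) can be extended to a DP-$F$-coloring of $(G,H)$. Let $H$ and $F$ be such a cover and such a function, and let $R_1$ be a DP-$F$-coloring of $K$. Then there exists a DP-$F$-coloring of $(G,H)$ with a strictly $F$-degenerate order $S$ such that the $|R_1|$ lowest-ordered elements of $S$ are the elements of $R_1$.
   Context: $|f(v)|=f_1(v)+\cdots+f_s(v)$. A cover $H$ of $G$ w.r.t. $L$ has vertex set $\{(u,c):c\in L(u)\}$, each $\{u\}\times L(u)$ is a clique, for each edge $uv$ the edges between $\{u\}\times L(u)$ and $\{v\}\times L(v)$ form a matching, and there are no such edges for non-adjacent $u,v$. A representative set contains exactly one vertex of each $\{v\}\times L(v)$. A DP-$F$-coloring is a representative set $R$ together with an ordering of $R$ (a strictly $F$-degenerate order) in which each $(v,i)\in R$ has fewer than $f_i(v)$ $H$-neighbors among earlier elements of $R$; extending a coloring means finding a DP-$F$-coloring of $(G,H)$ containing it. *)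

theory Defs
  imports Main
begin

definition graph :: "'a set \<Rightarrow> ('a \<Rightarrow> 'a \<Rightarrow> bool) \<Rightarrow> bool" where
  "graph V E \<longleftrightarrow> finite V \<and> (\<forall>u v. E u v \<longrightarrow> u \<in> V \<and> v \<in> V \<and> u \<noteq> v \<and> E v u)"

definition subgraph :: "'a set \<Rightarrow> ('a \<Rightarrow> 'a \<Rightarrow> bool) \<Rightarrow> 'a set \<Rightarrow> ('a \<Rightarrow> 'a \<Rightarrow> bool) \<Rightarrow> bool" where
  "subgraph VK EK V E \<longleftrightarrow> graph VK EK \<and> VK \<subseteq> V \<and> (\<forall>u v. EK u v \<longrightarrow> E u v)"

text \<open>A cover H (given by its edge relation HE on pairs (vertex, colour)) of the graph (V,E)
  with respect to the list assignment L(v) = {1..s} for every v.  The vertex set of H is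
  V \<times> {1..s}.\<close>
definition cover :: "'a set \<Rightarrow> ('a \<Rightarrow> 'a \<Rightarrow> bool) \<Rightarrow> nat \<Rightarrow> ('a \<times> nat \<Rightarrow> 'a \<times> nat \<Rightarrow> bool) \<Rightarrow> bool" where
  "cover V E s HE \<longleftrightarrow>
     (\<forall>x y. HE x y \<longrightarrow> x \<in> V \<times> {1..s} \<and> y \<in> V \<times> {1..s} \<and> x \<noteq> y \<and> HE y x) \<and>
     (\<forall>u\<in>V. \<forall>c\<in>{1..s}. \<forall>c'\<in>{1..s}. c \<noteq> c' \<longrightarrow> HE (u,c) (u,c')) \<and>
     (\<forall>u v c c'. HE (u,c) (v,c') \<longrightarrow> u = v \<or> E u v) \<and>
     (\<forall>u v c c1 c2. u \<noteq> v \<longrightarrow> HE (u,c) (v,c1) \<longrightarrow> HE (u,c) (v,c2) \<longrightarrow> c1 = c2)"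

text \<open>A DP-F-colouring of the vertex set U w.r.t. (the subgraph of) the cover HE induced on
  U \<times> {1..s}: a representative set given together with a strictly F-degenerate order,
  encoded as the list S of its elements in that order.  f i v is f_i(v).\<close>
definition dp_coloring :: "'a set \<Rightarrow> nat \<Rightarrow> ('a \<times> nat \<Rightarrow> 'a \<times> nat \<Rightarrow> bool) \<Rightarrow> (nat \<Rightarrow> 'a \<Rightarrow> nat) \<Rightarrow> ('a \<times> nat) list \<Rightarrow> bool" where
  "dp_coloring U s HE f S \<longleftrightarrow>
     distinct (map fst S) \<and> set (map fst S) = U \<and> (\<forall>x\<in>set S. snd x \<in> {1..s}) \<and>
     (\<forall>j < length S. card {l. l < j \<and> HE (S ! l) (S ! j)} < f (snd (S ! j)) (fst (S ! j)))"

definition extends_coloring :: "'a set \<Rightarrow> nat \<Rightarrow> ('a \<times> nat \<Rightarrow> 'a \<times> nat \<Rightarrow> bool) \<Rightarrow> (nat \<Rightarrow> 'a \<Rightarrow> nat) \<Rightarrow> ('a \<times> nat) list \<Rightarrow> bool" where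
  "extends_coloring V s HE f R \<longleftrightarrow> (\<exists>S. dp_coloring V s HE f S \<and> set R \<subseteq> set S)"

end

theory Submission
  imports Defs
begin

lemma count_take:
  assumes "distinct xs" "j \<le> length xs"
  shows "card {l. l < j \<and> P (xs ! l)} = card {y \<in> set (take j xs). P y}"
proof -
  have eq: "{y \<in> set (take j xs). P y} = (\<lambda>l. xs ! l) ` {l. l < j \<and> P (xs ! l)}"
  proof
    show "{y \<in> set (take j xs). P y} \<subseteq> (\<lambda>l. xs ! l) ` {l. l < j \<and> P (xs ! l)}"
    proof
      fix y assume "y \<in> {y \<in> set (take j xs). P y}"
      then obtain l where "l < length (take j xs)" "take j xs ! l = y" "P y"
        by (auto simp: in_set_conv_nth)
      then show "y \<in> (\<lambda>l. xs ! l) ` {l. l < j \<and> P (xs ! l)}" using assms by auto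
    qed
  next
    show "(\<lambda>l. xs ! l) ` {l. l < j \<and> P (xs ! l)} \<subseteq> {y \<in> set (take j xs). P y}"
    proof
      fix y assume "y \<in> (\<lambda>l. xs ! l) ` {l. l < j \<and> P (xs ! l)}"
      then obtain l where "l < j" "P (xs ! l)" "y = xs ! l" by auto
      then show "y \<in> {y \<in> set (take j xs). P y}" using assms
        by (auto simp: in_set_conv_nth intro!: exI[of _ l])
    qed
  qed
  have "inj_on (\<lambda>l. xs ! l) {l. l < j \<and> P (xs ! l)}"
    using assms by (auto simp: inj_on_def nth_eq_iff_index_eq)
  from card_image[OF this] show ?thesis by (simp add: eq)
qed

theorem lemma5:
  fixes k :: nat and V VK :: "'a set" and E EK :: "'a \<Rightarrow> 'a \<Rightarrow> bool"
    and s :: nat and HE :: "'a \<times> nat \<Rightarrow> 'a \<times> nat \<Rightarrow> bool" and f :: "nat \<Rightarrow> 'a \<Rightarrow> nat"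
    and R1 :: "('a \<times> nat) list"
  assumes "k > 0"
    and "graph V E"
    and "subgraph VK EK V E"
    and hyp_ext: "\<forall>s' HE' f'. s' \<ge> 1 \<longrightarrow> cover V E s' HE' \<longrightarrow>
                 (\<forall>v\<in>V. (\<Sum>i=1..s'. f' i v) \<ge> k) \<longrightarrow>
                 (\<forall>R. dp_coloring VK s' HE' f' R \<longrightarrow> extends_coloring V s' HE' f' R)"
    and "s \<ge> 1"
    and "cover V E s HE"
    and "\<forall>v\<in>V. (\<Sum>i=1..s. f i v) \<ge> k"
    and "dp_coloring VK s HE f R1"
  shows "\<exists>S. dp_coloring V s HE f S \<and> set (take (length R1) S) = set R1"
proof -
  note cov = assms(6)[unfolded cover_def]
  note R1d = assms(8)[unfolded dp_coloring_def]
  have VKV: "VK \<subseteq> V" using assms(3) by (simp add: subgraph_def)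
  have injR1: "inj_on fst (set R1)" using R1d by (simp add: distinct_map)
  define HE' where "HE' = (\<lambda>x y. (HE x y \<and> \<not>(x \<in> set R1 \<and> y \<in> set R1)) \<or>
      (fst x = fst y \<and> fst x \<in> V \<and> x \<noteq> y \<and> snd x \<in> {1..Suc s} \<and> snd y \<in> {1..Suc s}
        \<and> (snd x = Suc s \<or> snd y = Suc s)))"
  define f' where "f' = (\<lambda>i u. if u \<in> VK then (if i = Suc s then k else 1)
      else (if i = Suc s then 0 else f i u))"
  have c1: "\<forall>x y. HE' x y \<longrightarrow> x \<in> V \<times> {1..Suc s} \<and> y \<in> V \<times> {1..Suc s} \<and> x \<noteq> y \<and> HE' y x"
  proof (intro allI impI)
    fix x y assume "HE' x y"
    then consider (a) "HE x y" "\<not>(x \<in> set R1 \<and> y \<in> set R1)"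
      | (b) "fst x = fst y" "fst x \<in> V" "x \<noteq> y" "snd x \<in> {1..Suc s}" "snd y \<in> {1..Suc s}"
        "snd x = Suc s \<or> snd y = Suc s"
      unfolding HE'_def by blast
    then show "x \<in> V \<times> {1..Suc s} \<and> y \<in> V \<times> {1..Suc s} \<and> x \<noteq> y \<and> HE' y x"
    proof cases
      case a
      have "x \<in> V \<times> {1..s} \<and> y \<in> V \<times> {1..s} \<and> x \<noteq> y \<and> HE y x"
        using cov a(1) by blast
      then show ?thesis using a(2) unfolding HE'_def by (auto simp: mem_Times_iff)
    next
      case b
      then show ?thesis unfolding HE'_def by (auto simp: mem_Times_iff)
    qed
  qed
  have c2: "\<forall>u\<in>V. \<forall>c\<in>{1..Suc s}. \<forall>c'\<in>{1..Suc s}. c \<noteq> c' \<longrightarrow> HE' (u,c) (u,c')"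
  proof (intro ballI impI)
    fix u c c' assume u: "u \<in> V" and c: "c \<in> {1..Suc s}" "c' \<in> {1..Suc s}" "c \<noteq> c'"
    show "HE' (u, c) (u, c')"
    proof (cases "c = Suc s \<or> c' = Suc s")
      case True then show ?thesis using u c unfolding HE'_def by auto
    next
      case False
      then have "c \<in> {1..s}" "c' \<in> {1..s}" using c by auto
      then have "HE (u,c) (u,c')" using cov u c by blast
      moreover have "\<not> ((u,c) \<in> set R1 \<and> (u,c') \<in> set R1)"
        using injR1 c(3) by (metis fst_conv prod.inject inj_onD)
      ultimately show ?thesis unfolding HE'_def by auto
    qed
  qed
  have cov3: "\<forall>u v c c'. HE (u,c) (v,c') \<longrightarrow> u = v \<or> E u v" using cov by (elim conjE) assumption
  have cov4: "\<forall>u v c c1 c2. u \<noteq> v \<longrightarrow> HE (u,c) (v,c1) \<longrightarrow> HE (u,c) (v,c2) \<longrightarrow> c1 = c2"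
    using cov by (elim conjE) assumption
  have c3: "\<forall>u v c c'. HE' (u,c) (v,c') \<longrightarrow> u = v \<or> E u v"
  proof (intro allI impI)
    fix u v c c' assume "HE' (u,c) (v,c')"
    then have "HE (u,c) (v,c') \<or> u = v" unfolding HE'_def by auto
    then show "u = v \<or> E u v" using cov3 by blast
  qed
  have c4: "\<forall>u v c c1 c2. u \<noteq> v \<longrightarrow> HE' (u,c) (v,c1) \<longrightarrow> HE' (u,c) (v,c2) \<longrightarrow> c1 = c2"
  proof (intro allI impI)
    fix u v c c1 c2 assume "u \<noteq> v" "HE' (u,c) (v,c1)" "HE' (u,c) (v,c2)"
    then have "HE (u,c) (v,c1)" "HE (u,c) (v,c2)" unfolding HE'_def by auto
    then show "c1 = c2" using cov4 \<open>u \<noteq> v\<close> by blast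
  qed
  have cov': "cover V E (Suc s) HE'"
    unfolding cover_def using c1 c2 c3 c4 by blast
  have sum': "\<forall>v\<in>V. (\<Sum>i=1..Suc s. f' i v) \<ge> k"
  proof
    fix v assume v: "v \<in> V"
    have split: "(\<Sum>i=1..Suc s. f' i v) = (\<Sum>i=1..s. f' i v) + f' (Suc s) v"
      by simp
    show "(\<Sum>i=1..Suc s. f' i v) \<ge> k"
    proof (cases "v \<in> VK")
      case True then show ?thesis unfolding split by (simp add: f'_def)
    next
      case False
      have "(\<Sum>i=1..s. f' i v) = (\<Sum>i=1..s. f i v)"
        by (rule sum.cong) (auto simp: f'_def False)
      then show ?thesis unfolding split using assms(7) v False by (simp add: f'_def)
    qed
  qed
  have R1': "dp_coloring VK (Suc s) HE' f' R1"
    unfolding dp_coloring_def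
  proof (intro conjI allI impI)
    show "distinct (map fst R1)" "set (map fst R1) = VK" using R1d by auto
    show "\<forall>x\<in>set R1. snd x \<in> {1..Suc s}" using R1d by auto
  next
    fix j assume j: "j < length R1"
    have "{l. l < j \<and> HE' (R1 ! l) (R1 ! j)} = {}"
    proof (rule ccontr)
      assume "{l. l < j \<and> HE' (R1 ! l) (R1 ! j)} \<noteq> {}"
      then obtain l where l: "l < j" "HE' (R1 ! l) (R1 ! j)" by auto
      have "fst (R1 ! l) \<noteq> fst (R1 ! j)"
      proof -
        have "map fst R1 ! l \<noteq> map fst R1 ! j"
        proof -
          have d: "distinct (map fst R1)" using R1d by blast
          show ?thesis using nth_eq_iff_index_eq[OF d, of l j] l(1) j by simp
        qed
        then show ?thesis using l(1) j by simp
      qed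
      then show False using l j unfolding HE'_def by auto
    qed
    moreover have "fst (R1 ! j) \<in> VK" "snd (R1 ! j) \<in> {1..s}" using R1d j by auto
    ultimately show "card {l. l < j \<and> HE' (R1 ! l) (R1 ! j)} < f' (snd (R1 ! j)) (fst (R1 ! j))"
      by (simp add: f'_def)
  qed
  obtain S where S: "dp_coloring V (Suc s) HE' f' S" and RS: "set R1 \<subseteq> set S"
  proof -
    have "extends_coloring V (Suc s) HE' f' R1"
      using hyp_ext cov' sum' R1' by simp
    then show ?thesis using that unfolding extends_coloring_def by blast
  qed
  note Sd = S[unfolded dp_coloring_def]
  have dmS: "distinct (map fst S)" using Sd by blast
  have fstS: "fst ` set S = V" using Sd by simp
  have sndS: "\<forall>x\<in>set S. snd x \<in> {1..Suc s}" using Sd by blast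
  have cntS: "\<forall>j<length S. card {l. l < j \<and> HE' (S ! l) (S ! j)} < f' (snd (S ! j)) (fst (S ! j))"
    using Sd by blast
  have distS: "distinct S" and injS: "inj_on fst (set S)" using dmS by (simp_all add: distinct_map)
  have fstR1: "fst ` set R1 = VK" using R1d by simp
  have sndR1: "\<forall>x\<in>set R1. snd x \<in> {1..s}" using R1d by blast
  have dmR1: "distinct (map fst R1)" using R1d by blast
  have cntR1: "\<forall>j<length R1. card {l. l < j \<and> HE (R1 ! l) (R1 ! j)} < f (snd (R1 ! j)) (fst (R1 ! j))"
    using R1d by blast
  have out: "fst x \<notin> VK" if "x \<in> set S" "x \<notin> set R1" for x
  proof
    assume "fst x \<in> VK"
    then obtain r where r: "r \<in> set R1" "fst r = fst x" using fstR1 by force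
    then have "r \<in> set S" using RS by blast
    then have "r = x" using injS r(2) that(1) by (auto dest: inj_onD)
    then show False using r(1) that(2) by simp
  qed
  have snd_out: "snd x \<in> {1..s}" if xx: "x \<in> set S" "x \<notin> set R1" for x
  proof -
    obtain p where p: "p < length S" "S ! p = x" using xx(1) by (auto simp: in_set_conv_nth)
    have "card {l. l < p \<and> HE' (S ! l) (S ! p)} < f' (snd x) (fst x)" using cntS p by auto
    then have "f' (snd x) (fst x) \<noteq> 0" by linarith
    then have "snd x \<noteq> Suc s" using out[OF xx] by (auto simp: f'_def)
    then show ?thesis using sndS xx(1) by auto
  qed
  have R1first: "\<not> HE' (S ! p) (S ! q)" if "q < length S" "S ! q \<in> set R1" "p < q" for p q
  proof
    assume h: "HE' (S ! p) (S ! q)"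
    have "fst (S ! q) \<in> VK" using fstR1 that(2) by blast
    moreover have "snd (S ! q) \<noteq> Suc s" using sndR1 that(2) by auto
    ultimately have "f' (snd (S ! q)) (fst (S ! q)) = 1" by (simp add: f'_def)
    then have "card {l. l < q \<and> HE' (S ! l) (S ! q)} = 0" using cntS that(1) by fastforce
    moreover have "finite {l. l < q \<and> HE' (S ! l) (S ! q)}" by simp
    ultimately have "{l. l < q \<and> HE' (S ! l) (S ! q)} = {}" by simp
    then show False using h that(3) by blast
  qed
  define P where "P = (\<lambda>x. x \<notin> set R1)"
  define T where "T = filter P S"
  define S' where "S' = R1 @ T"
  have setT: "set T = set S - set R1" unfolding T_def P_def by auto
  have dmT: "distinct (map fst T)"
  proof -
    have "distinct T" unfolding T_def using distS by simp
    moreover have "inj_on fst (set T)" using injS setT by (auto intro: inj_on_subset)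
    ultimately show ?thesis by (simp add: distinct_map)
  qed
  have dmS': "distinct (map fst S')"
  proof -
    have "fst ` set R1 \<inter> fst ` set T = {}"
    proof (rule ccontr)
      assume "fst ` set R1 \<inter> fst ` set T \<noteq> {}"
      then obtain y where "y \<in> set T" "fst y \<in> VK" using fstR1 by force
      then show False using out setT by blast
    qed
    then show ?thesis unfolding S'_def using dmR1 dmT by simp
  qed
  have distS': "distinct S'" using dmS' by (simp add: distinct_map)
  have fstS': "set (map fst S') = V"
  proof
    show "set (map fst S') \<subseteq> V" unfolding S'_def using fstR1 VKV fstS setT by auto
  next
    show "V \<subseteq> set (map fst S')"
    proof
      fix v assume v: "v \<in> V"
      show "v \<in> set (map fst S')"
      proof (cases "v \<in> VK")
        case True then show ?thesis unfolding S'_def using fstR1 by auto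
      next
        case False
        obtain x where x: "x \<in> set S" "fst x = v" using v fstS by auto
        then have "x \<notin> set R1" using False fstR1 by auto
        then have "x \<in> set T" using setT x by auto
        then show ?thesis unfolding S'_def using x by auto
      qed
    qed
  qed
  have sndS': "\<forall>x\<in>set S'. snd x \<in> {1..s}"
    unfolding S'_def using sndR1 snd_out setT by auto
  have HE'sym: "HE' x y \<Longrightarrow> HE' y x" for x y using c1 by blast
  have cntS': "card {l. l < j \<and> HE (S' ! l) (S' ! j)} < f (snd (S' ! j)) (fst (S' ! j))"
    if j: "j < length S'" for j
  proof (cases "j < length R1")
    case True
    have "{l. l < j \<and> HE (S' ! l) (S' ! j)} = {l. l < j \<and> HE (R1 ! l) (R1 ! j)}"
      using True unfolding S'_def by (auto simp: nth_append)
    moreover have "S' ! j = R1 ! j" using True unfolding S'_def by (simp add: nth_append)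
    ultimately show ?thesis using cntR1 True by simp
  next
    case False
    define m where "m = length R1"
    define i where "i = j - m"
    have jm: "j = m + i" using False unfolding i_def m_def by simp
    have iT: "i < length T" using j jm unfolding S'_def m_def by simp
    define x where "x = T ! i"
    have xS': "S' ! j = x" unfolding x_def S'_def using jm m_def by (simp add: nth_append)
    have xT: "x \<in> set T" unfolding x_def using iT by simp
    then have xS: "x \<in> set S" and xR: "x \<notin> set R1" using setT by auto
    obtain p where p: "p < length S" "S ! p = x" using xS by (auto simp: in_set_conv_nth)
    have Ssplit: "S = take p S @ x # drop (Suc p) S" using id_take_nth_drop[OF p(1)] p(2) by simp
    have Tsplit: "T = filter P (take p S) @ x # filter P (drop (Suc p) S)"
      unfolding T_def by (subst Ssplit) (simp add: P_def xR)
    have distT: "distinct T" unfolding T_def using distS by simp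
    have "T ! length (filter P (take p S)) = x" by (subst Tsplit) (simp add: nth_append)
    moreover have "length (filter P (take p S)) < length T" by (subst Tsplit) simp
    ultimately have i_eq: "i = length (filter P (take p S))"
      using nth_eq_iff_index_eq[OF distT iT] x_def by metis
    have takeT: "take i T = filter P (take p S)"
      by (subst Tsplit) (simp add: i_eq)
    have takeS': "take j S' = R1 @ filter P (take p S)"
      unfolding S'_def jm m_def using takeT m_def by simp
    have "card {l. l < j \<and> HE (S' ! l) (S' ! j)} = card {y \<in> set (take j S'). HE y x}"
      using count_take[OF distS', of j "\<lambda>y. HE y x"] j xS' by simp
    also have "\<dots> \<le> card {y \<in> set (take p S). HE' y x}"
    proof (rule card_mono)
      show "finite {y \<in> set (take p S). HE' y x}" by simp
      show "{y \<in> set (take j S'). HE y x} \<subseteq> {y \<in> set (take p S). HE' y x}"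
      proof
        fix y assume y: "y \<in> {y \<in> set (take j S'). HE y x}"
        then have hy: "HE y x" by simp
        have "y \<in> set R1 \<or> y \<in> set (filter P (take p S))" using y takeS' by auto
        then show "y \<in> {y \<in> set (take p S). HE' y x}"
        proof
          assume yR: "y \<in> set R1"
          have h': "HE' y x" unfolding HE'_def using hy xR by simp
          have "y \<in> set S" using yR RS by blast
          then obtain q where q: "q < length S" "S ! q = y" by (auto simp: in_set_conv_nth)
          have "q < p"
          proof (rule ccontr)
            assume "\<not> q < p"
            moreover have "q \<noteq> p" using q p yR xR by auto
            ultimately have "p < q" by simp
            then have "\<not> HE' (S ! p) (S ! q)" using R1first[of q p] q yR by simp
            then show False using HE'sym[OF h'] p q by simp
          qed
          then have "y \<in> set (take p S)" using q p by (auto simp: in_set_conv_nth intro!: exI[of _ q])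
          then show ?thesis using h' by simp
        next
          assume "y \<in> set (filter P (take p S))"
          then have "y \<in> set (take p S)" "y \<notin> set R1" by (auto simp: P_def)
          then show ?thesis unfolding HE'_def using hy by simp
        qed
      qed
    qed
    also have "\<dots> = card {l. l < p \<and> HE' (S ! l) (S ! p)}"
      using count_take[OF distS, of p "\<lambda>y. HE' y x"] p by simp
    also have "\<dots> < f' (snd x) (fst x)" using cntS p by auto
    also have "\<dots> = f (snd x) (fst x)"
      using out[OF xS xR] snd_out[OF xS xR] by (auto simp: f'_def)
    finally show ?thesis using xS' by simp
  qed
  have "dp_coloring V s HE f S'"
    unfolding dp_coloring_def using dmS' fstS' sndS' cntS' by blast
  moreover have "set (take (length R1) S') = set R1" unfolding S'_def by simp
  ultimately show ?thesis by blast
qed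

end
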